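(* Let $n\ge3$ and let $f$ be a $\gamma_{tr3}(P_3\square P_n)$-function such that the number of vertices $v$ with $f(v)=\emptyset$ is minimum among all $\gamma_{tr3}(P_3\square P_n)$-functions. If $j\in\{0,1,\dots,n-2\}$ satisfies $|f((1,j))|=|f((2,j))|=1$, then $|f((1,j+1))|+|f((2,j+1))|=2$.
   Context: $P_m$ denotes the directed path with vertex set $\{0,1,\dots,m-1\}$ and arcs $(i,i+1)$ for $0\le i\le m-2$. The Cartesian product $D_1\square D_2$ has vertex set $V(D_1)\times V(D_2)$, with an arc from $(x_1,y_1)$ to $(x_2,y_2)$ iff either $(x_1,x_2)$ is an arc of $D_1$ and $y_1=y_2$, or $x_1=x_2$ and $(y_1,y_2)$ is an arc of $D_2$. For a digraph $D$ and positive integer $k$, a $k$-rainbow dominating function on $D$ is $f:V(D)\to\mathcal P(\{1,\dots,k\})$ such that every $v$ with $f(v)=\emptyset$ satisfies $\bigcup_{u\in N^-(v)}f(u)=\{1,\dots,k\}$, where $N^-(v)$ is the set of in-neighbors of $v$; its weight is $\sum_v|f(v)|$. It is total if additionally the subdigraph induced by $\{v:f(v)\ne\emptyset\}$ has no isolated vertex (a vertex with neither in- nor out-neighbors in it). $\gamma_{trk}(D)$ is the minimum weight of a total $k$-rainbow dominating function, and a $\gamma_{trk}(D)$-function is one attaining it. *)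

theory Defs
  imports Main
begin

type_synonym 'a digraph = "'a set \<times> ('a \<times> 'a) set"

definition verts :: "'a digraph \<Rightarrow> 'a set" where "verts D = fst D"
definition arcs :: "'a digraph \<Rightarrow> ('a \<times> 'a) set" where "arcs D = snd D"

definition dipath :: "nat \<Rightarrow> nat digraph" where
  "dipath m = ({0..<m}, {(i, i + 1) | i. i + 1 < m})"

definition cart_prod :: "'a digraph \<Rightarrow> 'b digraph \<Rightarrow> ('a \<times> 'b) digraph" where
  "cart_prod D1 D2 =
     (verts D1 \<times> verts D2,
      {((x1, y), (x2, y)) | x1 x2 y. (x1, x2) \<in> arcs D1 \<and> y \<in> verts D2} \<union>
      {((x, y1), (x, y2)) | x y1 y2. x \<in> verts D1 \<and> (y1, y2) \<in> arcs D2})"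

definition in_nbrs :: "'a digraph \<Rightarrow> 'a \<Rightarrow> 'a set" where
  "in_nbrs D v = {u \<in> verts D. (u, v) \<in> arcs D}"

definition rainbow_dom :: "nat \<Rightarrow> 'a digraph \<Rightarrow> ('a \<Rightarrow> nat set) \<Rightarrow> bool" where
  "rainbow_dom k D f \<longleftrightarrow>
     (\<forall>v \<in> verts D. f v \<subseteq> {1..k}) \<and>
     (\<forall>v \<in> verts D. f v = {} \<longrightarrow> (\<Union>u \<in> in_nbrs D v. f u) = {1..k})"

definition total_rainbow_dom :: "nat \<Rightarrow> 'a digraph \<Rightarrow> ('a \<Rightarrow> nat set) \<Rightarrow> bool" where
  "total_rainbow_dom k D f \<longleftrightarrow> rainbow_dom k D f \<and>
     (\<forall>v \<in> verts D. f v \<noteq> {} \<longrightarrow>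
        (\<exists>u \<in> verts D. u \<noteq> v \<and> f u \<noteq> {} \<and> ((u, v) \<in> arcs D \<or> (v, u) \<in> arcs D)))"

definition weight :: "'a digraph \<Rightarrow> ('a \<Rightarrow> nat set) \<Rightarrow> nat" where
  "weight D f = (\<Sum>v \<in> verts D. card (f v))"

definition gamma_tr :: "nat \<Rightarrow> 'a digraph \<Rightarrow> nat" where
  "gamma_tr k D = (LEAST w. \<exists>f. total_rainbow_dom k D f \<and> weight D f = w)"

definition gamma_tr_function :: "nat \<Rightarrow> 'a digraph \<Rightarrow> ('a \<Rightarrow> nat set) \<Rightarrow> bool" where
  "gamma_tr_function k D f \<longleftrightarrow> total_rainbow_dom k D f \<and> weight D f = gamma_tr k D"

definition num_empty :: "'a digraph \<Rightarrow> ('a \<Rightarrow> nat set) \<Rightarrow> nat" where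
  "num_empty D f = card {v \<in> verts D. f v = {}}"

end

theory Submission
  imports Defs
begin


abbreviation G :: "nat \<Rightarrow> (nat \<times> nat) digraph" where
  "G n \<equiv> cart_prod (dipath 3) (dipath n)"

lemma verts_G: "verts (G n) = {0..<3} \<times> {0..<n}"
  by (simp add: cart_prod_def verts_def dipath_def)

lemma arcs_G: "(((a::nat),(b::nat)),(c,d)) \<in> arcs (G n) \<longleftrightarrow>
   (c = Suc a \<and> d = b \<and> c < 3 \<and> b < n) \<or> (c = a \<and> d = Suc b \<and> a < 3 \<and> d < n)"
  by (auto simp add: cart_prod_def verts_def arcs_def dipath_def)

lemma fin_G: "finite (verts (G n))"
  by (simp add: verts_G)

lemma union_in_nbrs:
  assumes "a < 3" "b < n"
  shows "(\<Union>u\<in>in_nbrs (G n) (a,b). g u) =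
     (if a > 0 then g (a-1,b) else {}) \<union> (if b > 0 then g (a,b-1) else {})"
proof -
  have "in_nbrs (G n) (a,b) = (if a > 0 then {(a-1,b)} else {}) \<union> (if b > 0 then {(a,b-1)} else {})"
    using assms by (auto simp add: in_nbrs_def verts_G arcs_G)
  then show ?thesis by auto
qed

lemma improve:
  assumes tf: "total_rainbow_dom 3 D f"
  and sub: "\<forall>v\<in>verts D. g v \<subseteq> {1..3}"
  and keep: "\<forall>v\<in>verts D. f v \<noteq> {} \<longrightarrow> g v \<noteq> {}"
  and newtot: "\<forall>v\<in>verts D. g v \<noteq> {} \<longrightarrow> f v = {} \<longrightarrow>
      (\<exists>u\<in>verts D. u \<noteq> v \<and> g u \<noteq> {} \<and> ((u, v) \<in> arcs D \<or> (v, u) \<in> arcs D))"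
  and dom: "\<forall>v\<in>verts D. g v = {} \<longrightarrow> (\<forall>u\<in>in_nbrs D v. f u \<subseteq> g u) \<or>
      (\<Union>u\<in>in_nbrs D v. g u) = {1..3}"
  shows "total_rainbow_dom 3 D g"
  unfolding total_rainbow_dom_def rainbow_dom_def
proof (intro conjI ballI impI)
  fix v assume v: "v \<in> verts D"
  show "g v \<subseteq> {1..3}" using sub v by auto
next
  fix v assume v: "v \<in> verts D" and e: "g v = {}"
  have fe: "f v = {}" using keep v e by auto
  have fu: "(\<Union>u\<in>in_nbrs D v. f u) = {1..3}" using tf v fe
    unfolding total_rainbow_dom_def rainbow_dom_def by auto
  have gsub: "(\<Union>u\<in>in_nbrs D v. g u) \<subseteq> {1..3}" using sub
    by (auto simp: in_nbrs_def)
  have "(\<forall>u\<in>in_nbrs D v. f u \<subseteq> g u) \<or> (\<Union>u\<in>in_nbrs D v. g u) = {1..3}"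
    using dom v e by blast
  then show "(\<Union>u\<in>in_nbrs D v. g u) = {1..3}"
  proof
    assume "\<forall>u\<in>in_nbrs D v. f u \<subseteq> g u"
    then have "(\<Union>u\<in>in_nbrs D v. f u) \<subseteq> (\<Union>u\<in>in_nbrs D v. g u)" by auto
    then show ?thesis using fu gsub by auto
  qed
next
  fix v assume v: "v \<in> verts D" and ne: "g v \<noteq> {}"
  show "\<exists>u\<in>verts D. u \<noteq> v \<and> g u \<noteq> {} \<and> ((u, v) \<in> arcs D \<or> (v, u) \<in> arcs D)"
  proof (cases "f v = {}")
    case True then show ?thesis using newtot v ne by auto
  next
    case False
    then obtain u where "u\<in>verts D" "u \<noteq> v" "f u \<noteq> {}" "(u, v) \<in> arcs D \<or> (v, u) \<in> arcs D"
      using tf v unfolding total_rainbow_dom_def by blast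
    then show ?thesis using keep by blast
  qed
qed

lemma dom_helper:
  assumes "\<forall>u. u \<noteq> p \<longrightarrow> f u \<subseteq> g u"
  and "\<forall>v\<in>verts D. g v = {} \<longrightarrow> (p,v) \<in> arcs D \<longrightarrow> (\<Union>u\<in>in_nbrs D v. g u) = {1..3}"
  shows "\<forall>v\<in>verts D. g v = {} \<longrightarrow> (\<forall>u\<in>in_nbrs D v. f u \<subseteq> g u) \<or>
      (\<Union>u\<in>in_nbrs D v. g u) = {1..3}"
proof (intro ballI impI)
  fix v assume v: "v \<in> verts D" and e: "g v = {}"
  show "(\<forall>u\<in>in_nbrs D v. f u \<subseteq> g u) \<or> (\<Union>u\<in>in_nbrs D v. g u) = {1..3}"
  proof (cases "p \<in> in_nbrs D v")
    case True
    then have "(p, v) \<in> arcs D" by (simp add: in_nbrs_def)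
    then have "(\<Union>u\<in>in_nbrs D v. g u) = {1..3}" using assms(2) v e by blast
    then show ?thesis by (rule disjI2)
  next
    case False
    have "\<forall>u\<in>in_nbrs D v. f u \<subseteq> g u"
    proof
      fix u assume "u \<in> in_nbrs D v"
      then have "u \<noteq> p" using False by auto
      then show "f u \<subseteq> g u" using assms(1) by blast
    qed
    then show ?thesis by (rule disjI1)
  qed
qed

lemma weight_upd1:
  assumes "finite (verts D)" "p \<in> verts D"
  shows "weight D (f(p:=A)) + card (f p) = weight D f + card A"
proof -
  have "weight D (f(p:=A)) = card A + (\<Sum>v\<in>verts D - {p}. card ((f(p:=A)) v))"
    unfolding weight_def using assms by (simp add: sum.remove)
  moreover have "weight D f = card (f p) + (\<Sum>v\<in>verts D - {p}. card (f v))"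
    unfolding weight_def using assms by (simp add: sum.remove)
  moreover have "(\<Sum>v\<in>verts D - {p}. card ((f(p:=A)) v)) = (\<Sum>v\<in>verts D - {p}. card (f v))"
    by (rule sum.cong) auto
  ultimately show ?thesis by simp
qed

lemma num_empty_less:
  assumes "finite (verts D)" "\<forall>v\<in>verts D. f v \<noteq> {} \<longrightarrow> g v \<noteq> {}"
    "q \<in> verts D" "f q = {}" "g q \<noteq> {}"
  shows "num_empty D g < num_empty D f"
  unfolding num_empty_def
  by (rule psubset_card_mono) (use assms in auto)

lemma gamma_le:
  assumes "total_rainbow_dom k D g"
  shows "gamma_tr k D \<le> weight D g"
  unfolding gamma_tr_def by (rule Least_le) (use assms in auto)

lemma no_better:
  assumes "gamma_tr_function 3 D f"
    and "\<forall>g. gamma_tr_function 3 D g \<longrightarrow> num_empty D f \<le> num_empty D g"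
    and "total_rainbow_dom 3 D g" and "weight D g \<le> weight D f"
    and "weight D g < weight D f \<or> num_empty D g < num_empty D f"
  shows False
proof -
  have "gamma_tr 3 D \<le> weight D g" using gamma_le assms(3) by blast
  then have "weight D g = weight D f" using assms(1,4) unfolding gamma_tr_function_def by auto
  moreover have "gamma_tr_function 3 D g" using assms(1,3) calculation unfolding gamma_tr_function_def by auto
  then have "num_empty D f \<le> num_empty D g" using assms(2) by blast
  ultimately show False using assms(5) by linarith
qed



lemma basics:
  assumes "gamma_tr_function 3 (G n) f"
  shows "total_rainbow_dom 3 (G n) f" "\<And>a b. a < 3 \<Longrightarrow> b < n \<Longrightarrow> f (a,b) \<subseteq> {1..3}"
    "\<And>a b. a < 3 \<Longrightarrow> b < n \<Longrightarrow> f (a,b) = {} \<Longrightarrow> (\<Union>u\<in>in_nbrs (G n) (a,b). f u) = {1..3}"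
  using assms unfolding gamma_tr_function_def total_rainbow_dom_def rainbow_dom_def
  by (auto simp: verts_G)

lemma sub_helper:
  assumes "\<forall>v\<in>verts (G n). g v \<subseteq> f v \<union> C" "C \<subseteq> {1..3}"
    "\<And>a b. a < 3 \<Longrightarrow> b < n \<Longrightarrow> f (a,b) \<subseteq> {1..3}"
  shows "\<forall>v\<in>verts (G n). g v \<subseteq> {1..3}"
proof
  fix v assume v: "v \<in> verts (G n)"
  obtain a b where ab: "v = (a,b)" by fastforce
  have "f v \<subseteq> {1..3}" using assms(3) v by (auto simp: ab verts_G)
  then show "g v \<subseteq> {1..3}" using assms(1,2) v by blast
qed

lemma case_row2:
  assumes gf: "gamma_tr_function 3 (G n) f"
    and minf: "\<forall>g. gamma_tr_function 3 (G n) g \<longrightarrow> num_empty (G n) f \<le> num_empty (G n) g"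
    and jn: "j + 1 < n" and c2: "2 \<le> card (f (2, j+1))"
  shows False
proof -
  note B = basics[OF gf]
  define p where "p = (2::nat, j+1)"
  have pV: "p \<in> verts (G n)" using jn by (simp add: p_def verts_G)
  have fin: "finite (f p)" using B(2)[of 2 "j+1"] jn finite_subset by (auto simp: p_def)
  have "f p \<noteq> {}" using c2 by (auto simp: p_def)
  then obtain c where c: "c \<in> f p" by blast
  have cr: "card (f p - {c}) + 1 = card (f p)" using c fin
    by (metis One_nat_def add.right_neutral add_Suc_right card_Suc_Diff1)
  have rne: "f p - {c} \<noteq> {}"
  proof
    assume "f p - {c} = {}"
    then have "card (f p - {c}) = 0" by (simp only: card.empty)
    with cr have "card (f p) = 1" by linarith
    then show False using c2 by (simp add: p_def)
  qed
  have c3: "c \<in> {1..3}" using c B(2)[of 2 "j+1"] jn by (auto simp: p_def)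
  show False
  proof (cases "j + 2 < n \<and> f (2, j+2) = {}")
    case True
    define q where "q = (2::nat, j+2)"
    define g where "g = f(p := f p - {c}, q := {c})"
    have qV: "q \<in> verts (G n)" using True by (simp add: q_def verts_G)
    have pq: "p \<noteq> q" by (simp add: p_def q_def)
    have fq: "f q = {}" using True by (simp add: q_def)
    have tg: "total_rainbow_dom 3 (G n) g"
    proof (rule improve[OF B(1)])
      show "\<forall>v\<in>verts (G n). g v \<subseteq> {1..3}" by (rule sub_helper[where C="{c}" and f=f and n=n, OF _ _ B(2)]) (use c3 in \<open>auto simp: g_def\<close>)
      show "\<forall>v\<in>verts (G n). f v \<noteq> {} \<longrightarrow> g v \<noteq> {}" using rne by (auto simp: g_def)
      show "\<forall>v\<in>verts (G n). g v \<noteq> {} \<longrightarrow> f v = {} \<longrightarrow>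
        (\<exists>u\<in>verts (G n). u \<noteq> v \<and> g u \<noteq> {} \<and> ((u, v) \<in> arcs (G n) \<or> (v, u) \<in> arcs (G n)))"
      proof (intro ballI impI)
        fix v assume "v \<in> verts (G n)" "g v \<noteq> {}" "f v = {}"
        then have "v = q" using \<open>f p \<noteq> {}\<close> by (auto simp: g_def split: if_splits)
        then show "\<exists>u\<in>verts (G n). u \<noteq> v \<and> g u \<noteq> {} \<and> ((u, v) \<in> arcs (G n) \<or> (v, u) \<in> arcs (G n))"
          using pV pq rne True by (intro bexI[of _ p]) (auto simp: g_def p_def q_def arcs_G)
      qed
      show "\<forall>v\<in>verts (G n). g v = {} \<longrightarrow> (\<forall>u\<in>in_nbrs (G n) v. f u \<subseteq> g u) \<or>
          (\<Union>u\<in>in_nbrs (G n) v. g u) = {1..3}"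
      proof (rule dom_helper[where p=p])
        show "\<forall>u. u \<noteq> p \<longrightarrow> f u \<subseteq> g u" using fq by (auto simp: g_def)
        show "\<forall>v\<in>verts (G n). g v = {} \<longrightarrow> (p, v) \<in> arcs (G n) \<longrightarrow> (\<Union>u\<in>in_nbrs (G n) v. g u) = {1..3}"
        proof (intro ballI impI)
          fix v assume "v \<in> verts (G n)" "g v = {}" "(p, v) \<in> arcs (G n)"
          then show "(\<Union>u\<in>in_nbrs (G n) v. g u) = {1..3}"
            by (cases v) (auto simp: g_def p_def q_def arcs_G)
        qed
      qed
    qed
    have w1: "weight (G n) (f(p := f p - {c})) + card (f p) = weight (G n) f + card (f p - {c})"
      by (rule weight_upd1[OF fin_G pV])
    have w2: "weight (G n) g + card ((f(p := f p - {c})) q) = weight (G n) (f(p := f p - {c})) + card {c}"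
      unfolding g_def by (rule weight_upd1[OF fin_G qV])
    have "weight (G n) g = weight (G n) f" using w1 w2 cr pq fq by simp
    moreover have "num_empty (G n) g < num_empty (G n) f"
      by (rule num_empty_less[where D="G n" and f=f and g=g and q=q, OF fin_G _ qV fq]) (use rne pq in \<open>auto simp: g_def\<close>)
    ultimately show False using no_better[OF gf minf tg] by simp
  next
    case False
    define g where "g = f(p := f p - {c})"
    have tg: "total_rainbow_dom 3 (G n) g"
    proof (rule improve[OF B(1)])
      show "\<forall>v\<in>verts (G n). g v \<subseteq> {1..3}" by (rule sub_helper[where C="{c}" and f=f and n=n, OF _ _ B(2)]) (use c3 in \<open>auto simp: g_def\<close>)
      show "\<forall>v\<in>verts (G n). f v \<noteq> {} \<longrightarrow> g v \<noteq> {}" using rne by (auto simp: g_def)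
      show "\<forall>v\<in>verts (G n). g v \<noteq> {} \<longrightarrow> f v = {} \<longrightarrow>
        (\<exists>u\<in>verts (G n). u \<noteq> v \<and> g u \<noteq> {} \<and> ((u, v) \<in> arcs (G n) \<or> (v, u) \<in> arcs (G n)))"
        using \<open>f p \<noteq> {}\<close> by (auto simp: g_def)
      show "\<forall>v\<in>verts (G n). g v = {} \<longrightarrow> (\<forall>u\<in>in_nbrs (G n) v. f u \<subseteq> g u) \<or>
          (\<Union>u\<in>in_nbrs (G n) v. g u) = {1..3}"
      proof (rule dom_helper[where p=p])
        show "\<forall>u. u \<noteq> p \<longrightarrow> f u \<subseteq> g u" by (auto simp: g_def)
        show "\<forall>v\<in>verts (G n). g v = {} \<longrightarrow> (p, v) \<in> arcs (G n) \<longrightarrow> (\<Union>u\<in>in_nbrs (G n) v. g u) = {1..3}"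
        proof (intro ballI impI)
          fix v assume "v \<in> verts (G n)" "g v = {}" "(p, v) \<in> arcs (G n)"
          then show "(\<Union>u\<in>in_nbrs (G n) v. g u) = {1..3}"
            using False by (cases v) (auto simp: g_def p_def arcs_G)
        qed
      qed
    qed
    have w1: "weight (G n) g + card (f p) = weight (G n) f + card (f p - {c})"
      unfolding g_def by (rule weight_upd1[OF fin_G pV])
    have "weight (G n) g < weight (G n) f" using w1 cr by simp
    then show False using no_better[OF gf minf tg] by simp
  qed
qed



lemma case_row1:
  assumes gf: "gamma_tr_function 3 (G n) f"
    and minf: "\<forall>g. gamma_tr_function 3 (G n) g \<longrightarrow> num_empty (G n) f \<le> num_empty (G n) g"
    and jn: "j + 1 < n" and c1: "2 \<le> card (f (1, j+1))"
    and h2: "f (2, j+1) = {} \<Longrightarrow> f (1, j+1) = {1..3}"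
    and y1: "card (f (2, j)) = 1"
  shows False
proof -
  note B = basics[OF gf]
  define p where "p = (1::nat, j+1)"
  have pV: "p \<in> verts (G n)" using jn by (simp add: p_def verts_G)
  have fin: "finite (f p)" using B(2)[of 1 "j+1"] jn finite_subset by (auto simp: p_def)
  have "f p \<noteq> {}" using c1 by (auto simp: p_def)
  obtain y where y: "f (2, j) = {y}" using y1 card_1_singletonE by blast
  have y3: "y \<in> {1..3}" using B(2)[of 2 j] jn y by auto
  obtain c where c: "c \<in> f p" and K: "f (2, j+1) = {} \<Longrightarrow> f (2, j) \<union> (f p - {c}) = {1..3}"
  proof (cases "f (2, j+1) = {}")
    case True
    then have "f p = {1..3}" using h2 by (simp add: p_def)
    then have yp: "y \<in> f p" using y3 by simp
    have "f (2, j) \<union> (f p - {y}) = {1..3}" using \<open>f p = {1..3}\<close> y y3 by auto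
    then show ?thesis by (intro that[of y] yp)
  next
    case False
    obtain c where "c \<in> f p" using \<open>f p \<noteq> {}\<close> by blast
    then show ?thesis using False by (intro that[of c]) auto
  qed
  have cr: "card (f p - {c}) + 1 = card (f p)" using c fin
    by (metis One_nat_def add.right_neutral add_Suc_right card_Suc_Diff1)
  have rne: "f p - {c} \<noteq> {}"
  proof
    assume "f p - {c} = {}"
    then have "card (f p - {c}) = 0" by (simp only: card.empty)
    with cr have "card (f p) = 1" by linarith
    then show False using c1 by (simp add: p_def)
  qed
  have c3: "c \<in> {1..3}" using c B(2)[of 1 "j+1"] jn by (auto simp: p_def)
  show False
  proof (cases "j + 2 < n \<and> f (1, j+2) = {}")
    case True
    define q where "q = (1::nat, j+2)"
    define g where "g = f(p := f p - {c}, q := {c})"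
    have qV: "q \<in> verts (G n)" using True by (simp add: q_def verts_G)
    have pq: "p \<noteq> q" by (simp add: p_def q_def)
    have fq: "f q = {}" using True by (simp add: q_def)
    have tg: "total_rainbow_dom 3 (G n) g"
    proof (rule improve[OF B(1)])
      show "\<forall>v\<in>verts (G n). g v \<subseteq> {1..3}" by (rule sub_helper[where C="{c}" and f=f and n=n, OF _ _ B(2)]) (use c3 in \<open>auto simp: g_def\<close>)
      show "\<forall>v\<in>verts (G n). f v \<noteq> {} \<longrightarrow> g v \<noteq> {}" using rne by (auto simp: g_def)
      show "\<forall>v\<in>verts (G n). g v \<noteq> {} \<longrightarrow> f v = {} \<longrightarrow>
        (\<exists>u\<in>verts (G n). u \<noteq> v \<and> g u \<noteq> {} \<and> ((u, v) \<in> arcs (G n) \<or> (v, u) \<in> arcs (G n)))"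
      proof (intro ballI impI)
        fix v assume "v \<in> verts (G n)" "g v \<noteq> {}" "f v = {}"
        then have "v = q" using \<open>f p \<noteq> {}\<close> by (auto simp: g_def split: if_splits)
        then show "\<exists>u\<in>verts (G n). u \<noteq> v \<and> g u \<noteq> {} \<and> ((u, v) \<in> arcs (G n) \<or> (v, u) \<in> arcs (G n))"
          using pV pq rne True by (intro bexI[of _ p]) (auto simp: g_def p_def q_def arcs_G)
      qed
      show "\<forall>v\<in>verts (G n). g v = {} \<longrightarrow> (\<forall>u\<in>in_nbrs (G n) v. f u \<subseteq> g u) \<or>
          (\<Union>u\<in>in_nbrs (G n) v. g u) = {1..3}"
      proof (rule dom_helper[where p=p])
        show "\<forall>u. u \<noteq> p \<longrightarrow> f u \<subseteq> g u" using fq by (auto simp: g_def)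
        show "\<forall>v\<in>verts (G n). g v = {} \<longrightarrow> (p, v) \<in> arcs (G n) \<longrightarrow> (\<Union>u\<in>in_nbrs (G n) v. g u) = {1..3}"
        proof (intro ballI impI)
          fix v assume "v \<in> verts (G n)" "g v = {}" "(p, v) \<in> arcs (G n)"
          note vv = this
          obtain a b where ab: "v = (a,b)" by fastforce
          have "(a = 2 \<and> b = j+1) \<or> (a = 1 \<and> b = j + 2 \<and> b < n)"
            using vv(3) by (auto simp: ab p_def arcs_G)
          moreover have "\<not> (a = 1 \<and> b = j + 2)"
            using vv(2) by (auto simp: ab g_def q_def)
          ultimately have v: "v = (2, j+1)" by (auto simp: ab)
          have e: "f (2, j+1) = {}" using vv(2) by (simp add: v g_def p_def q_def)
          have "g (1, j+1) = f p - {c}" "g (2, j) = f (2, j)" by (auto simp: g_def p_def q_def)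
          then show "(\<Union>u\<in>in_nbrs (G n) v. g u) = {1..3}"
            using K[OF e] jn by (simp add: v union_in_nbrs Un_commute)
        qed
      qed
    qed
    have w1: "weight (G n) (f(p := f p - {c})) + card (f p) = weight (G n) f + card (f p - {c})"
      by (rule weight_upd1[OF fin_G pV])
    have w2: "weight (G n) g + card ((f(p := f p - {c})) q) = weight (G n) (f(p := f p - {c})) + card {c}"
      unfolding g_def by (rule weight_upd1[OF fin_G qV])
    have "weight (G n) g = weight (G n) f" using w1 w2 cr pq fq by simp
    moreover have "num_empty (G n) g < num_empty (G n) f"
      by (rule num_empty_less[where D="G n" and f=f and g=g and q=q, OF fin_G _ qV fq]) (use rne pq in \<open>auto simp: g_def\<close>)
    ultimately show False using no_better[OF gf minf tg] by simp
  next
    case False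
    define g where "g = f(p := f p - {c})"
    have tg: "total_rainbow_dom 3 (G n) g"
    proof (rule improve[OF B(1)])
      show "\<forall>v\<in>verts (G n). g v \<subseteq> {1..3}" by (rule sub_helper[where C="{c}" and f=f and n=n, OF _ _ B(2)]) (use c3 in \<open>auto simp: g_def\<close>)
      show "\<forall>v\<in>verts (G n). f v \<noteq> {} \<longrightarrow> g v \<noteq> {}" using rne by (auto simp: g_def)
      show "\<forall>v\<in>verts (G n). g v \<noteq> {} \<longrightarrow> f v = {} \<longrightarrow>
        (\<exists>u\<in>verts (G n). u \<noteq> v \<and> g u \<noteq> {} \<and> ((u, v) \<in> arcs (G n) \<or> (v, u) \<in> arcs (G n)))"
        using \<open>f p \<noteq> {}\<close> by (auto simp: g_def)
      show "\<forall>v\<in>verts (G n). g v = {} \<longrightarrow> (\<forall>u\<in>in_nbrs (G n) v. f u \<subseteq> g u) \<or>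
          (\<Union>u\<in>in_nbrs (G n) v. g u) = {1..3}"
      proof (rule dom_helper[where p=p])
        show "\<forall>u. u \<noteq> p \<longrightarrow> f u \<subseteq> g u" by (auto simp: g_def)
        show "\<forall>v\<in>verts (G n). g v = {} \<longrightarrow> (p, v) \<in> arcs (G n) \<longrightarrow> (\<Union>u\<in>in_nbrs (G n) v. g u) = {1..3}"
        proof (intro ballI impI)
          fix v assume "v \<in> verts (G n)" "g v = {}" "(p, v) \<in> arcs (G n)"
          note vv = this
          obtain a b where ab: "v = (a,b)" by fastforce
          have "(a = 2 \<and> b = j+1) \<or> (a = 1 \<and> b = j + 2 \<and> b < n)"
            using vv(3) by (auto simp: ab p_def arcs_G)
          moreover have "\<not> (a = 1 \<and> b = j + 2 \<and> b < n)"
            using vv(2) False by (auto simp: ab g_def p_def)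
          ultimately have v: "v = (2, j+1)" by (auto simp: ab)
          have e: "f (2, j+1) = {}" using vv(2) by (simp add: v g_def p_def)
          have "g (1, j+1) = f p - {c}" "g (2, j) = f (2, j)" by (auto simp: g_def p_def)
          then show "(\<Union>u\<in>in_nbrs (G n) v. g u) = {1..3}"
            using K[OF e] jn by (simp add: v union_in_nbrs Un_commute)
        qed
      qed
    qed
    have w1: "weight (G n) g + card (f p) = weight (G n) f + card (f p - {c})"
      unfolding g_def by (rule weight_upd1[OF fin_G pV])
    have "weight (G n) g < weight (G n) f" using w1 cr by simp
    then show False using no_better[OF gf minf tg] by simp
  qed
qed



lemma three_minus_ne: "(x::nat) \<in> {1..3} \<Longrightarrow> {1..3} - {x} \<noteq> {}"
proof
  assume "{1..3} - {x} = {}"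
  moreover have "(if x = 1 then 2 else 1) \<in> {1..3::nat} - {x}" by auto
  ultimately show False by (simp only: empty_iff)
qed

lemma case_row0:
  assumes gf: "gamma_tr_function 3 (G n) f"
    and minf: "\<forall>g. gamma_tr_function 3 (G n) g \<longrightarrow> num_empty (G n) f \<le> num_empty (G n) g"
    and jn: "j + 1 < n" and e1: "f (1, j+1) = {}" and c2: "card (f (2, j+1)) = 1"
    and x1: "card (f (1, j)) = 1"
  shows False
proof -
  note B = basics[OF gf]
  define p where "p = (1::nat, j+1)"
  define r where "r = (0::nat, j+1)"
  have pV: "p \<in> verts (G n)" using jn by (simp add: p_def verts_G)
  have rV: "r \<in> verts (G n)" using jn by (simp add: r_def verts_G)
  have pr: "p \<noteq> r" by (simp add: p_def r_def)
  obtain x where x: "f (1, j) = {x}" using x1 card_1_singletonE by blast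
  have x3: "x \<in> {1..3}" using B(2)[of 1 j] jn x by auto
  have "(\<Union>u\<in>in_nbrs (G n) (1, j+1). f u) = {1..3}" using B(3)[of 1 "j+1"] jn e1 by simp
  then have U: "f r \<union> {x} = {1..3}" using jn x by (simp add: union_in_nbrs r_def)
  have fr3: "f r \<subseteq> {1..3}" using B(2)[of 0 "j+1"] jn by (simp add: r_def)
  have finr: "finite (f r)" using fr3 finite_subset by blast
  have f2ne: "f (2, j+1) \<noteq> {}" using c2 by auto
  show False
  proof (cases "j + 2 < n \<and> f (0, j+2) = {}")
    case True
    define q where "q = (0::nat, j+2)"
    define A where "A = {1..3::nat} - {x}"
    define g where "g = f(r := A, q := {x})"
    have qV: "q \<in> verts (G n)" using True by (simp add: q_def verts_G)
    have rq: "r \<noteq> q" by (simp add: r_def q_def)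
    have fq: "f q = {}" using True by (simp add: q_def)
    have "(\<Union>u\<in>in_nbrs (G n) (0, j+2). f u) = {1..3}" using B(3)[of 0 "j+2"] True by simp
    then have frfull: "f r = {1..3}" using True by (simp add: union_in_nbrs r_def)
    have Ane: "A \<noteq> {}" unfolding A_def using three_minus_ne[OF x3] .
    have frne: "f r \<noteq> {}" using frfull by simp
    have tg: "total_rainbow_dom 3 (G n) g"
    proof (rule improve[OF B(1)])
      show "\<forall>v\<in>verts (G n). g v \<subseteq> {1..3}" by (rule sub_helper[where C="{1..3}" and f=f and n=n, OF _ _ B(2)]) (use x3 in \<open>auto simp: g_def A_def\<close>)
      show "\<forall>v\<in>verts (G n). f v \<noteq> {} \<longrightarrow> g v \<noteq> {}" using Ane by (auto simp: g_def)
      show "\<forall>v\<in>verts (G n). g v \<noteq> {} \<longrightarrow> f v = {} \<longrightarrow>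
        (\<exists>u\<in>verts (G n). u \<noteq> v \<and> g u \<noteq> {} \<and> ((u, v) \<in> arcs (G n) \<or> (v, u) \<in> arcs (G n)))"
      proof (intro ballI impI)
        fix v assume "v \<in> verts (G n)" "g v \<noteq> {}" "f v = {}"
        then have "v = q" using frne by (auto simp: g_def split: if_splits)
        then show "\<exists>u\<in>verts (G n). u \<noteq> v \<and> g u \<noteq> {} \<and> ((u, v) \<in> arcs (G n) \<or> (v, u) \<in> arcs (G n))"
          using rV rq Ane True by (intro bexI[of _ r]) (auto simp: g_def r_def q_def arcs_G)
      qed
      show "\<forall>v\<in>verts (G n). g v = {} \<longrightarrow> (\<forall>u\<in>in_nbrs (G n) v. f u \<subseteq> g u) \<or>
          (\<Union>u\<in>in_nbrs (G n) v. g u) = {1..3}"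
      proof (rule dom_helper[where p=r])
        show "\<forall>u. u \<noteq> r \<longrightarrow> f u \<subseteq> g u" using fq by (auto simp: g_def)
        show "\<forall>v\<in>verts (G n). g v = {} \<longrightarrow> (r, v) \<in> arcs (G n) \<longrightarrow> (\<Union>u\<in>in_nbrs (G n) v. g u) = {1..3}"
        proof (intro ballI impI)
          fix v assume "v \<in> verts (G n)" "g v = {}" "(r, v) \<in> arcs (G n)"
          note vv = this
          obtain a b where ab: "v = (a,b)" by fastforce
          have "(a = 1 \<and> b = j+1) \<or> (a = 0 \<and> b = j + 2 \<and> b < n)"
            using vv(3) by (auto simp: ab r_def arcs_G)
          moreover have "\<not> (a = 0 \<and> b = j + 2)"
            using vv(2) by (auto simp: ab g_def q_def)
          ultimately have v: "v = (1, j+1)" by (auto simp: ab)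
          have "g (0, j+1) = A" "g (1, j) = {x}" using x by (auto simp: g_def r_def q_def)
          then show "(\<Union>u\<in>in_nbrs (G n) v. g u) = {1..3}"
            using jn x3 by (auto simp: v union_in_nbrs A_def)
        qed
      qed
    qed
    have cA: "card A = 2" using x3 by (auto simp: A_def)
    have w1: "weight (G n) (f(r := A)) + card (f r) = weight (G n) f + card A"
      by (rule weight_upd1[OF fin_G rV])
    have w2: "weight (G n) g + card ((f(r := A)) q) = weight (G n) (f(r := A)) + card {x}"
      unfolding g_def by (rule weight_upd1[OF fin_G qV])
    have "weight (G n) g = weight (G n) f" using w1 w2 cA frfull rq fq by simp
    moreover have "num_empty (G n) g < num_empty (G n) f"
      by (rule num_empty_less[where D="G n" and f=f and g=g and q=q, OF fin_G _ qV fq]) (use Ane rq in \<open>auto simp: g_def\<close>)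
    ultimately show False using no_better[OF gf minf tg] by simp
  next
    case False
    have sub: "{1..3} - {x} \<subseteq> f r" using U by auto
    have "card ({1..3::nat} - {x}) = 2" using x3 by auto
    then have cr2: "2 \<le> card (f r)" using card_mono[OF finr sub] by simp
    have "f r \<noteq> {}" using cr2 by auto
    then obtain c where c: "c \<in> f r" by blast
    have cr: "card (f r - {c}) + 1 = card (f r)" using c finr
      by (metis One_nat_def add.right_neutral add_Suc_right card_Suc_Diff1)
    have rne: "f r - {c} \<noteq> {}"
    proof
      assume "f r - {c} = {}"
      then have "card (f r - {c}) = 0" by (simp only: card.empty)
      with cr have "card (f r) = 1" by linarith
      then show False using cr2 by simp
    qed
    have c3: "c \<in> {1..3}" using c fr3 by auto
    have fp: "f p = {}" using e1 by (simp add: p_def)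
    define g where "g = f(r := f r - {c}, p := {c})"
    have tg: "total_rainbow_dom 3 (G n) g"
    proof (rule improve[OF B(1)])
      show "\<forall>v\<in>verts (G n). g v \<subseteq> {1..3}" by (rule sub_helper[where C="{c}" and f=f and n=n, OF _ _ B(2)]) (use c3 in \<open>auto simp: g_def\<close>)
      show "\<forall>v\<in>verts (G n). f v \<noteq> {} \<longrightarrow> g v \<noteq> {}" using rne by (auto simp: g_def)
      show "\<forall>v\<in>verts (G n). g v \<noteq> {} \<longrightarrow> f v = {} \<longrightarrow>
        (\<exists>u\<in>verts (G n). u \<noteq> v \<and> g u \<noteq> {} \<and> ((u, v) \<in> arcs (G n) \<or> (v, u) \<in> arcs (G n)))"
      proof (intro ballI impI)
        fix v assume "v \<in> verts (G n)" "g v \<noteq> {}" "f v = {}"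
        then have "v = p" using \<open>f r \<noteq> {}\<close> by (auto simp: g_def split: if_splits)
        moreover have "(2, j+1) \<in> verts (G n)" using jn by (simp add: verts_G)
        moreover have "g (2, j+1) \<noteq> {}" using f2ne by (simp add: g_def p_def r_def)
        ultimately show "\<exists>u\<in>verts (G n). u \<noteq> v \<and> g u \<noteq> {} \<and> ((u, v) \<in> arcs (G n) \<or> (v, u) \<in> arcs (G n))"
          using jn by (intro bexI[of _ "(2, j+1)"]) (auto simp: p_def arcs_G)
      qed
      show "\<forall>v\<in>verts (G n). g v = {} \<longrightarrow> (\<forall>u\<in>in_nbrs (G n) v. f u \<subseteq> g u) \<or>
          (\<Union>u\<in>in_nbrs (G n) v. g u) = {1..3}"
      proof (rule dom_helper[where p=r])
        show "\<forall>u. u \<noteq> r \<longrightarrow> f u \<subseteq> g u" using fp by (auto simp: g_def)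
        show "\<forall>v\<in>verts (G n). g v = {} \<longrightarrow> (r, v) \<in> arcs (G n) \<longrightarrow> (\<Union>u\<in>in_nbrs (G n) v. g u) = {1..3}"
        proof (intro ballI impI)
          fix v assume "v \<in> verts (G n)" "g v = {}" "(r, v) \<in> arcs (G n)"
          note vv = this
          obtain a b where ab: "v = (a,b)" by fastforce
          have "(a = 1 \<and> b = j+1) \<or> (a = 0 \<and> b = j + 2 \<and> b < n)"
            using vv(3) by (auto simp: ab r_def arcs_G)
          moreover have "\<not> (a = 0 \<and> b = j + 2 \<and> b < n)"
            using vv(2) False by (auto simp: ab g_def p_def r_def)
          moreover have "\<not> (a = 1 \<and> b = j + 1)"
            using vv(2) by (auto simp: ab g_def p_def)
          ultimately show "(\<Union>u\<in>in_nbrs (G n) v. g u) = {1..3}" by blast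
        qed
      qed
    qed
    have w1: "weight (G n) (f(r := f r - {c})) + card (f r) = weight (G n) f + card (f r - {c})"
      by (rule weight_upd1[OF fin_G rV])
    have w2: "weight (G n) g + card ((f(r := f r - {c})) p) = weight (G n) (f(r := f r - {c})) + card {c}"
      unfolding g_def by (rule weight_upd1[OF fin_G pV])
    have "weight (G n) g = weight (G n) f" using w1 w2 cr pr fp by simp
    moreover have "num_empty (G n) g < num_empty (G n) f"
      by (rule num_empty_less[where D="G n" and f=f and g=g and q=p, OF fin_G _ pV fp]) (use rne pr in \<open>auto simp: g_def\<close>)
    ultimately show False using no_better[OF gf minf tg] by simp
  qed
qed



theorem lemma4p11:
  fixes n j :: nat and f :: "nat \<times> nat \<Rightarrow> nat set"
  assumes "n \<ge> 3"
    and "gamma_tr_function 3 (cart_prod (dipath 3) (dipath n)) f"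
    and "\<forall>g. gamma_tr_function 3 (cart_prod (dipath 3) (dipath n)) g \<longrightarrow>
           num_empty (cart_prod (dipath 3) (dipath n)) f \<le> num_empty (cart_prod (dipath 3) (dipath n)) g"
    and "j \<le> n - 2"
    and "card (f (1, j)) = 1" and "card (f (2, j)) = 1"
  shows "card (f (1, j + 1)) + card (f (2, j + 1)) = 2"
proof (rule ccontr)
  assume neg: "card (f (1, j + 1)) + card (f (2, j + 1)) \<noteq> 2"
  have jn: "j + 1 < n" using assms(1,4) by linarith
  note gf = assms(2) and minf = assms(3)
  note B = basics[OF gf]
  have s1: "f (1, j+1) \<subseteq> {1..3}" using B(2)[of 1 "j+1"] jn by simp
  have s2: "f (2, j+1) \<subseteq> {1..3}" using B(2)[of 2 "j+1"] jn by simp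
  have fin1: "finite (f (1, j+1))" using s1 finite_subset by blast
  have fin2: "finite (f (2, j+1))" using s2 finite_subset by blast
  have c1: "card (f (1, j+1)) \<le> 3" using card_mono[OF _ s1] by simp
  show False
  proof (cases "2 \<le> card (f (2, j+1))")
    case True
    show False by (rule case_row2[OF gf minf jn True])
  next
    case F2: False
    show False
    proof (cases "2 \<le> card (f (1, j+1))")
      case True
      have h2: "f (1, j+1) = {1..3}" if "f (2, j+1) = {}"
      proof -
        have "card (f (1, j+1)) = 3" using neg that True c1 by simp
        then show ?thesis using card_subset_eq[OF _ s1] by simp
      qed
      show False by (rule case_row1[OF gf minf jn True h2 assms(6)])
    next
      case F1: False
      show False
      proof (cases "f (2, j+1) = {}")
        case True
        have "(\<Union>u\<in>in_nbrs (G n) (2, j+1). f u) = {1..3}" using B(3)[of 2 "j+1"] jn True by simp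
        then have U: "f (1, j+1) \<union> f (2, j) = {1..3}" using jn by (simp add: union_in_nbrs)
        have "card (f (1, j+1) \<union> f (2, j)) \<le> card (f (1, j+1)) + card (f (2, j))" by (rule card_Un_le)
        then show False using U F1 assms(6) by simp
      next
        case False
        have "card (f (2, j+1)) \<noteq> 0" using False fin2 by simp
        then have "card (f (2, j+1)) = 1" using F2 by simp
        then have "card (f (1, j+1)) = 0" using neg F1 by simp
        then have e1: "f (1, j+1) = {}" using fin1 by simp
        show False by (rule case_row0[OF gf minf jn e1 \<open>card (f (2, j+1)) = 1\<close> assms(5)])
      qed
    qed
  qed
qed

end
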